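(* Let $\mu>0$, $s>0$, $\beta\in[0,1]$, and let $f\in\mathcal S^2_\mu(\mathbb R^n):=\bigcup_{L\ge\mu}\mathcal S^2_{\mu,L}(\mathbb R^n)$. Then the $\beta$-High Resolution ODE $$\ddot X(t)+2\sqrt\mu\,\dot X(t)+\beta\sqrt s\,\nabla^2 f(X(t))\dot X(t)+(1+\sqrt{\mu s})\nabla f(X(t))=0,$$ with initial conditions $X(0)=x_0$ and $\dot X(0)=-\frac{2\sqrt s\,\nabla f(x_0)}{1+\sqrt{\mu s}}$ (for arbitrary $x_0\in\mathbb R^n$), has a unique global solution $X\in C^2([0,\infty);\mathbb R^n)$.
   Context: $\mathcal F^1_L(\mathbb R^n)$: differentiable convex $f:\mathbb R^n\to\mathbb R$ with $\|\nabla f(x)-\nabla f(y)\|\le L\|x-y\|$. $\mathcal F^2_L(\mathbb R^n)$: the subclass of $\mathcal F^1_L(\mathbb R^n)$ of twice differentiable $f$ whose Hessian is Lipschitz in Frobenius norm, $\|\nabla^2 f(x)-\nabla^2 f(y)\|_F\le L'\|x-y\|$ for some constant $L'>0$. $\mathcal S^2_{\mu,L}(\mathbb R^n)$: the subclass of $\mathcal F^2_L(\mathbb R^n)$ of $\mu$-strongly convex functions, $f(y)\ge f(x)+\langle\nabla f(x),y-x\rangle+\frac\mu2\|y-x\|^2$, with $0<\mu\le L$. *)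

theory Defs
  imports "HOL-Analysis.Analysis"
begin

text \<open>Function class S^2_{mu,L}(R^n), with the gradient g and Hessian H of f given
  explicitly as functions (they are uniquely determined by f). The Frobenius norm of a
  matrix in real^'n^'n is its norm as an element of the Euclidean space real^'n^'n.\<close>

definition in_S2 :: "real \<Rightarrow> real \<Rightarrow> (real^'n \<Rightarrow> real) \<Rightarrow> (real^'n \<Rightarrow> real^'n)
    \<Rightarrow> (real^'n \<Rightarrow> real^'n^'n) \<Rightarrow> bool" where
  "in_S2 \<mu> L f g H \<longleftrightarrow>
     0 < \<mu> \<and> \<mu> \<le> L \<and>
     (\<forall>x. GDERIV f x :> g x) \<and>
     convex_on UNIV f \<and>
     (\<forall>x y. norm (g x - g y) \<le> L * norm (x - y)) \<and>
     (\<forall>x. (g has_derivative (\<lambda>h. H x *v h)) (at x)) \<and>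
     (\<exists>L'>0. \<forall>x y. norm (H x - H y) \<le> L' * norm (x - y)) \<and>
     (\<forall>x y. f y \<ge> f x + inner (g x) (y - x) + \<mu> / 2 * (norm (y - x))\<^sup>2)"

definition hr_solution :: "real \<Rightarrow> real \<Rightarrow> real \<Rightarrow> (real^'n \<Rightarrow> real^'n)
    \<Rightarrow> (real^'n \<Rightarrow> real^'n^'n) \<Rightarrow> real^'n \<Rightarrow> (real \<Rightarrow> real^'n) \<Rightarrow> bool" where
  "hr_solution \<mu> s \<beta> g H x0 X \<longleftrightarrow>
     (\<exists>X' X''.
        (\<forall>t\<ge>0. (X has_vector_derivative X' t) (at t within {0..})) \<and>
        (\<forall>t\<ge>0. (X' has_vector_derivative X'' t) (at t within {0..})) \<and>
        continuous_on {0..} X'' \<and>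
        (\<forall>t\<ge>0. X'' t + (2 * sqrt \<mu>) *\<^sub>R X' t + (\<beta> * sqrt s) *\<^sub>R (H (X t) *v X' t)
                 + (1 + sqrt (\<mu> * s)) *\<^sub>R g (X t) = 0) \<and>
        X 0 = x0 \<and>
        X' 0 = - ((2 * sqrt s) / (1 + sqrt (\<mu> * s))) *\<^sub>R g x0)"

end

theory Submission
  imports Defs
begin

lemma exp_has_integral:
  fixes a m :: real
  assumes "a > 0" "m \<ge> 0"
  shows "((\<lambda>u. exp (a*u)) has_integral (exp (a*m) - 1) / a) {0..m}"
proof -
  have "((\<lambda>u. exp (a*u)) has_integral (exp (a*m) / a - exp (a*0) / a)) {0..m}"
  proof (rule fundamental_theorem_of_calculus)
    fix x assume "x \<in> {0..m}"
    have "((\<lambda>u. exp (a*u) / a) has_real_derivative exp (a*x)) (at x within {0..m})"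
      using assms by (auto intro!: derivative_eq_intros)
    then show "((\<lambda>u. exp (a*u) / a) has_vector_derivative exp (a*x)) (at x within {0..m})"
      by (simp add: has_real_derivative_iff_has_vector_derivative)
  qed (use assms in auto)
  then show ?thesis by (simp add: diff_divide_distrib)
qed

lemma lip_cont:
  fixes F :: "'a::real_normed_vector \<Rightarrow> 'b::real_normed_vector"
  assumes "K > 0" and lip: "\<And>a b. norm (F a - F b) \<le> K * norm (a - b)"
  shows "continuous_on S F"
proof -
  have "K-lipschitz_on S F" unfolding lipschitz_on_def using assms by (auto simp: dist_norm)
  then show ?thesis by (rule lipschitz_on_continuous_on)
qed

lemma ode_exists:
  fixes F :: "'a::euclidean_space \<Rightarrow> 'a"
  assumes Kpos: "K > 0" and lip: "\<And>a b. norm (F a - F b) \<le> K * norm (a - b)"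
  shows "\<exists>z. z 0 = z0 \<and> continuous_on {0..} z \<and>
           (\<forall>t\<ge>0. (z has_vector_derivative F (z t)) (at t within {0..}))"
proof -
  have Fc: "continuous_on S F" for S using lip_cont[OF Kpos lip] .
  have Fb: "norm (F x) \<le> norm (F 0) + K * norm x" for x
    using lip[of x 0] norm_triangle_ineq[of "F x - F 0" "F 0"] by simp
  define W where "W u = exp (2*K*u)" for u
  define G where "G b u = F (W u *\<^sub>R apply_bcontfun b u)" for b :: "real \<Rightarrow>\<^sub>C 'a" and u
  have Gc: "continuous_on S (G b)" for b S
    unfolding G_def W_def
    by (rule continuous_on_compose2[OF Fc[of UNIV]]) (auto intro!: continuous_intros)
  have Gi: "G b integrable_on {0..m}" for b m
    by (rule integrable_continuous_real[OF Gc])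
  define P where "P b t = exp (-(2*K*max t 0)) *\<^sub>R (z0 + integral {0..max t 0} (G b))" for b t
  have Pc: "continuous_on UNIV (P b)" for b
  proof -
    have "isCont (P b) t" for t
    proof -
      define T where "T = \<bar>t\<bar> + 1"
      have "continuous_on {0..T} (\<lambda>m. integral {0..m} (G b))"
        by (rule indefinite_integral_continuous_1[OF Gi])
      then have "continuous_on {-T..T} (\<lambda>t. integral {0..max t 0} (G b))"
        by (rule continuous_on_compose2) (auto intro!: continuous_intros simp: T_def)
      then have "continuous_on {-T..T} (P b)"
        unfolding P_def by (auto intro!: continuous_intros)
      moreover have "t \<in> interior {-T..T}" by (auto simp: T_def)
      ultimately show ?thesis by (rule continuous_on_interior)
    qed
    then show ?thesis by (simp add: continuous_at_imp_continuous_on)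
  qed
  have intb: "norm (integral {0..m} h) \<le> C * ((W m - 1) / (2*K))"
    if "m \<ge> 0" "h integrable_on {0..m}" "\<And>u. u \<ge> 0 \<Longrightarrow> norm (h u) \<le> C * W u" for h :: "real \<Rightarrow> 'a" and C m
  proof -
    have hi: "((\<lambda>u. C * W u) has_integral C * ((W m - 1) / (2*K))) {0..m}"
      unfolding W_def using exp_has_integral[of "2*K" m] Kpos that(1)
      by (intro has_integral_mult_right) simp
    have "norm (integral {0..m} h) \<le> integral {0..m} (\<lambda>u. C * W u)"
      by (rule Henstock_Kurzweil_Integration.integral_norm_bound_integral)
        (use hi that in \<open>auto\<close>)
    also have "\<dots> = C * ((W m - 1) / (2*K))" using hi by (rule integral_unique)
    finally show ?thesis .
  qed
  have Wpos: "W u > 0" for u unfolding W_def by simp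
  have W1: "W u \<ge> 1" if "u \<ge> 0" for u unfolding W_def using Kpos that by simp
  have expW: "exp (-(2*K*m)) * W m = 1" for m unfolding W_def by (simp add: exp_minus field_simps)
  have scal: "exp (-(2*K*m)) * (C * ((W m - 1) / (2*K))) \<le> C / (2*K)" if "C \<ge> 0" for C m
  proof -
    have "exp (-(2*K*m)) * (C * ((W m - 1) / (2*K))) = C * (exp (-(2*K*m)) * W m - exp (-(2*K*m))) / (2*K)"
      by (simp add: algebra_simps)
    also have "\<dots> \<le> C * 1 / (2*K)" using expW[of m] that Kpos
      by (intro divide_right_mono mult_left_mono) auto
    finally show ?thesis by simp
  qed
  have contr: "norm (P b t - P c t) \<le> 1/2 * norm (b - c)" for b c t
  proof -
    define m where "m = max t 0"
    have "P b t - P c t = exp (-(2*K*m)) *\<^sub>R (integral {0..m} (\<lambda>u. G b u - G c u))"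
      unfolding P_def m_def by (simp add: integral_diff[OF Gi Gi] algebra_simps)
    moreover have GG: "norm (G b u - G c u) \<le> (K * norm (b - c)) * W u" for u
    proof -
      have "norm (G b u - G c u) \<le> K * norm (W u *\<^sub>R apply_bcontfun b u - W u *\<^sub>R apply_bcontfun c u)"
        unfolding G_def by (rule lip)
      also have "\<dots> = K * (W u * norm (apply_bcontfun (b - c) u))"
        using Wpos[of u] by (simp add: scaleR_diff_right[symmetric])
      also have "\<dots> \<le> K * (W u * norm (b - c))"
        using Kpos Wpos[of u] by (intro mult_left_mono norm_bounded) auto
      finally show ?thesis by (simp add: algebra_simps)
    qed
    ultimately have "norm (P b t - P c t) \<le> exp (-(2*K*m)) * ((K * norm (b - c)) * ((W m - 1) / (2*K)))"
    proof -
      have "(\<lambda>u. G b u - G c u) integrable_on {0..m}" by (intro integrable_diff Gi)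
      then have "norm (integral {0..m} (\<lambda>u. G b u - G c u)) \<le> (K * norm (b - c)) * ((W m - 1) / (2*K))"
        using GG
        by (intro intb) (auto simp: m_def)
      then show ?thesis using \<open>P b t - P c t = _\<close> by (simp add: mult_left_mono)
    qed
    also have "\<dots> \<le> (K * norm (b - c)) / (2*K)" using Kpos by (intro scal) auto
    finally show ?thesis using Kpos by simp
  qed
  have Pbound: "norm (P b t) \<le> norm z0 + (norm (F 0) + K * norm b) / (2*K)" for b t
  proof -
    define m where "m = max t 0"
    define C where "C = norm (F 0) + K * norm b"
    have C0: "C \<ge> 0" unfolding C_def using Kpos by auto
    have "norm (G b u) \<le> C * W u" if "u \<ge> 0" for u
    proof -
      have "norm (G b u) \<le> norm (F 0) + K * norm (W u *\<^sub>R apply_bcontfun b u)"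
        unfolding G_def by (rule Fb)
      also have "\<dots> \<le> norm (F 0) + K * (W u * norm b)"
        using Kpos Wpos[of u] norm_bounded[of b u] by (auto intro!: mult_left_mono)
      also have "\<dots> \<le> norm (F 0) * W u + K * (W u * norm b)"
        using W1[OF that] mult_left_mono[of 1 "W u" "norm (F 0)"] by auto
      finally show ?thesis by (simp add: C_def algebra_simps)
    qed
    then have ib: "norm (integral {0..m} (G b)) \<le> C * ((W m - 1) / (2*K))"
      using intb[of m "G b" C] Gi by (auto simp: m_def)
    have "norm (P b t) \<le> exp (-(2*K*m)) * (norm z0 + norm (integral {0..m} (G b)))"
      unfolding P_def m_def[symmetric] by (auto intro!: mult_left_mono norm_triangle_ineq)
    also have "\<dots> \<le> exp (-(2*K*m)) * norm z0 + exp (-(2*K*m)) * (C * ((W m - 1) / (2*K)))"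
      using mult_left_mono[OF ib, of "exp (-(2*K*m))"] by (simp add: distrib_left)
    also have "\<dots> \<le> norm z0 + C / (2*K)"
      using scal[OF C0, of m] Kpos unfolding m_def
      by (intro add_mono) (auto intro!: mult_left_le_one_le)
    finally show ?thesis by (simp add: C_def)
  qed
  have Pin: "P b \<in> bcontfun" for b
    by (rule bcontfun_normI[OF Pc Pbound])
  define \<Phi> where "\<Phi> b = Bcontfun (P b)" for b
  have \<Phi>a: "apply_bcontfun (\<Phi> b) = P b" for b
    unfolding \<Phi>_def using Pin by (simp add: Bcontfun_inverse)
  have "\<exists>!b. \<Phi> b = b"
  proof (rule banach_fix_type[of "1/2"])
    show "\<forall>x y. dist (\<Phi> x) (\<Phi> y) \<le> 1 / 2 * dist x y"
    proof (intro allI dist_bound)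
      fix x y t
      show "dist (apply_bcontfun (\<Phi> x) t) (apply_bcontfun (\<Phi> y) t) \<le> 1 / 2 * dist x y"
        unfolding dist_norm \<Phi>a by (rule contr)
    qed
  qed auto
  then obtain b where bfix: "\<Phi> b = b" by blast
  define z where "z t = W t *\<^sub>R apply_bcontfun b t" for t
  have zc: "continuous_on S z" for S
    unfolding z_def W_def by (auto intro!: continuous_intros)
  have Gz: "G b = (\<lambda>u. F (z u))" unfolding G_def z_def by auto
  have zeq: "z t = z0 + integral {0..t} (\<lambda>u. F (z u))" if "t \<ge> 0" for t
  proof -
    have "apply_bcontfun b t = P b t" using bfix \<Phi>a by metis
    then have "z t = (W t * exp (-(2*K*t))) *\<^sub>R (z0 + integral {0..t} (G b))"
      unfolding z_def P_def using that by simp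
    also have "W t * exp (-(2*K*t)) = 1" using expW[of t] by (simp add: mult.commute)
    finally show ?thesis by (simp add: Gz)
  qed
  have Fzc: "continuous_on S (\<lambda>u. F (z u))" for S
    by (rule continuous_on_compose2[OF Fc[of UNIV] zc]) auto
  have "(z has_vector_derivative F (z t)) (at t within {0..})" if "t \<ge> 0" for t
  proof -
    have "((\<lambda>u. integral {0..u} (\<lambda>u. F (z u))) has_vector_derivative F (z t)) (at t within {0..t+1})"
      by (rule integral_has_vector_derivative[OF Fzc]) (use that in auto)
    moreover have "at t within {0..t+1} = at t within {0..}"
      by (rule at_within_nhd[where S="{..<t+1}"]) auto
    ultimately have "((\<lambda>u. integral {0..u} (\<lambda>u. F (z u))) has_vector_derivative F (z t)) (at t within {0..})"
      by simp
    then have "((\<lambda>u. z0 + integral {0..u} (\<lambda>u. F (z u))) has_vector_derivative F (z t)) (at t within {0..})"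
      by (auto intro!: derivative_eq_intros)
    then show ?thesis
      by (rule has_vector_derivative_transform_within[where d=1]) (use that zeq in auto)
  qed
  moreover have "z 0 = z0" using zeq[of 0] by simp
  ultimately show ?thesis using zc by blast
qed

lemma ode_unique:
  fixes F :: "'a::euclidean_space \<Rightarrow> 'a"
  assumes Kpos: "K > 0" and lip: "\<And>a b. norm (F a - F b) \<le> K * norm (a - b)"
    and d1: "\<forall>t\<ge>0. (z1 has_vector_derivative F (z1 t)) (at t within {0..})"
    and d2: "\<forall>t\<ge>0. (z2 has_vector_derivative F (z2 t)) (at t within {0..})"
    and init: "z1 0 = z2 0"
  shows "\<forall>t\<ge>0. z1 t = z2 t"
proof -
  define d where "d t = z1 t - z2 t" for t
  define e where "e t = F (z1 t) - F (z2 t)" for t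
  define \<phi> where "\<phi> t = exp (-(2*K*t)) * (d t \<bullet> d t)" for t
  define \<phi>' where "\<phi>' t = exp (-(2*K*t)) * (-(2*K) * (d t \<bullet> d t) + 2 * (d t \<bullet> e t))" for t
  have d\<phi>: "(\<phi> has_real_derivative \<phi>' t) (at t within {0..})" if "t \<ge> 0" for t
  proof -
    have hd: "(d has_derivative (\<lambda>h. h *\<^sub>R e t)) (at t within {0..})"
      using has_vector_derivative_diff[OF d1[rule_format, OF that] d2[rule_format, OF that]]
      unfolding d_def e_def has_vector_derivative_def by (simp add: fun_diff_def)
    have "((\<lambda>x. d x \<bullet> d x) has_derivative (\<lambda>h. (2 * (d t \<bullet> e t)) * h)) (at t within {0..})"
      using has_derivative_inner[OF hd hd]
      by (rule has_derivative_eq_rhs) (auto simp: inner_commute algebra_simps fun_eq_iff)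
    then have hi: "((\<lambda>x. d x \<bullet> d x) has_real_derivative (2 * (d t \<bullet> e t))) (at t within {0..})"
      by (simp add: has_field_derivative_def)
    have he: "((\<lambda>x. exp (-(2*K*x))) has_real_derivative (exp (-(2*K*t)) * (-(2*K)))) (at t within {0..})"
      by (auto intro!: derivative_eq_intros)
    show ?thesis
      unfolding \<phi>_def \<phi>'_def using DERIV_mult[OF he hi] by (simp add: algebra_simps)
  qed
  have \<phi>'le: "\<phi>' t \<le> 0" for t
  proof -
    have "d t \<bullet> e t \<le> norm (d t) * norm (e t)" by (rule norm_cauchy_schwarz)
    also have "\<dots> \<le> norm (d t) * (K * norm (d t))"
      unfolding e_def d_def by (intro mult_left_mono lip) auto
    finally have "d t \<bullet> e t \<le> K * (d t \<bullet> d t)"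
      by (simp add: power2_norm_eq_inner[symmetric] power2_eq_square algebra_simps)
    then have "-(2*K) * (d t \<bullet> d t) + 2 * (d t \<bullet> e t) \<le> 0" by simp
    then show ?thesis unfolding \<phi>'_def by (simp add: mult_nonpos_nonneg[of _ 0] mult_le_0_iff)
  qed
  have \<phi>c: "continuous_on {0..} \<phi>"
    unfolding continuous_on_eq_continuous_within
    using d\<phi> DERIV_continuous by blast
  show ?thesis
  proof (intro allI impI)
    fix T :: real assume T: "T \<ge> 0"
    have "\<phi> T \<le> \<phi> 0"
    proof (rule DERIV_nonpos_imp_decreasing_open[OF T])
      fix x :: real assume x: "0 < x" "x < T"
      have "at x within {0..} = at x"
        by (rule at_within_interior) (use x in auto)
      then show "\<exists>y. (\<phi> has_real_derivative y) (at x) \<and> y \<le> 0"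
        using d\<phi>[of x] x \<phi>'le by auto
    next
      show "continuous_on {0..T} \<phi>" using \<phi>c by (rule continuous_on_subset) auto
    qed
    moreover have "\<phi> 0 = 0" unfolding \<phi>_def d_def using init by simp
    ultimately have "d T \<bullet> d T \<le> 0" unfolding \<phi>_def
      by (simp add: mult_le_0_iff)
    then show "z1 T = z2 T" unfolding d_def
      by (metis inner_gt_zero_iff not_le eq_iff_diff_eq_0)
  qed
qed

lemma mv_cont:
  fixes A :: "real \<Rightarrow> real^'n^'n" and v :: "real \<Rightarrow> real^'n"
  assumes "continuous_on S A" "continuous_on S v"
  shows "continuous_on S (\<lambda>t. A t *v v t)"
  unfolding matrix_vector_mult_def
  by (intro continuous_intros continuous_on_vec_lambda continuous_on_component assms)

lemma hvd_fst:
  assumes "(z has_vector_derivative v) (at t within S)"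
  shows "((\<lambda>t. fst (z t)) has_vector_derivative fst v) (at t within S)"
  using has_derivative_fst[OF assms[unfolded has_vector_derivative_def]]
  by (simp add: has_vector_derivative_def)

lemma hvd_snd:
  assumes "(z has_vector_derivative v) (at t within S)"
  shows "((\<lambda>t. snd (z t)) has_vector_derivative snd v) (at t within S)"
  using has_derivative_snd[OF assms[unfolded has_vector_derivative_def]]
  by (simp add: has_vector_derivative_def)

lemma hvd_scale:
  "(f has_vector_derivative f') F \<Longrightarrow> ((\<lambda>x. c *\<^sub>R f x) has_vector_derivative c *\<^sub>R f') F"
  by (rule bounded_linear.has_vector_derivative[OF bounded_linear_scaleR_right])

lemma hvd_chain:
  fixes g :: "real^'n \<Rightarrow> real^'n" and H :: "real^'n \<Rightarrow> real^'n^'n"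
  assumes "(X has_vector_derivative v) (at t within S)"
    and "\<And>x. (g has_derivative (\<lambda>h. H x *v h)) (at x)"
  shows "((\<lambda>t. g (X t)) has_vector_derivative H (X t) *v v) (at t within S)"
  using vector_derivative_diff_chain_within[OF assms(1) has_derivative_at_withinI[OF assms(2)]]
  by (simp add: o_def)

theorem theorem3p2:
  fixes \<mu> s \<beta> L :: real
    and f :: "real^'n \<Rightarrow> real" and g :: "real^'n \<Rightarrow> real^'n" and H :: "real^'n \<Rightarrow> real^'n^'n"
    and x0 :: "real^'n"
  assumes "\<mu> > 0" and "s > 0" and "0 \<le> \<beta>" and "\<beta> \<le> 1"
    and "L \<ge> \<mu>" and "in_S2 \<mu> L f g H"
  shows "(\<exists>X. hr_solution \<mu> s \<beta> g H x0 X) \<and>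
         (\<forall>X Y. hr_solution \<mu> s \<beta> g H x0 X \<longrightarrow> hr_solution \<mu> s \<beta> g H x0 Y
                 \<longrightarrow> (\<forall>t\<ge>0. X t = Y t))"
proof -
  have gd: "\<And>x. (g has_derivative (\<lambda>h. H x *v h)) (at x)"
    and glip: "\<And>x y. norm (g x - g y) \<le> L * norm (x - y)"
    using assms(6) unfolding in_S2_def by auto
  obtain L' where L'pos: "L' > 0" and Hlip: "\<And>x y. norm (H x - H y) \<le> L' * norm (x - y)"
    using assms(6) unfolding in_S2_def by auto
  have Lpos: "L > 0" using assms by linarith
  define a where "a = 2 * sqrt \<mu>"
  define c1 where "c1 = \<beta> * sqrt s"
  define c2 where "c2 = 1 + sqrt (\<mu> * s)"
  have a0: "a \<ge> 0" and c10: "c1 \<ge> 0" and c20: "c2 > 0"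
    using assms by (auto simp: a_def c1_def c2_def add_pos_nonneg)
  define F :: "(real^'n) \<times> (real^'n) \<Rightarrow> (real^'n) \<times> (real^'n)" where
    "F p = (snd p - c1 *\<^sub>R g (fst p), - a *\<^sub>R (snd p - c1 *\<^sub>R g (fst p)) - c2 *\<^sub>R g (fst p))" for p
  define K where "K = (1 + a) * (1 + c1 * L) + c2 * L + 1"
  have Kpos: "K > 0" unfolding K_def using a0 c10 c20 Lpos by (simp add: add_pos_nonneg)
  have Flip: "norm (F p - F q) \<le> K * norm (p - q)" for p q
  proof -
    define N where "N = norm (p - q)"
    have dx: "norm (fst p - fst q) \<le> N"
      using norm_fst_le[of "fst (p - q)" "snd (p - q)"] unfolding prod.collapse N_def by simp
    have dy: "norm (snd p - snd q) \<le> N"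
      using norm_snd_le[of "snd (p - q)" "fst (p - q)"] unfolding prod.collapse N_def by simp
    define D1 where "D1 = (snd p - c1 *\<^sub>R g (fst p)) - (snd q - c1 *\<^sub>R g (fst q))"
    define Dg where "Dg = g (fst p) - g (fst q)"
    have nDg: "norm Dg \<le> L * N" unfolding Dg_def using glip[of "fst p" "fst q"] dx Lpos
      by (meson order_trans mult_left_mono less_imp_le)
    have D1e: "D1 = (snd p - snd q) - c1 *\<^sub>R Dg"
      unfolding D1_def Dg_def by (simp add: algebra_simps)
    have nD1: "norm D1 \<le> (1 + c1 * L) * N"
    proof -
      have "norm D1 \<le> norm (snd p - snd q) + c1 * norm Dg"
        unfolding D1e using norm_triangle_ineq4[of "snd p - snd q" "c1 *\<^sub>R Dg"] c10 by simp
      also have "\<dots> \<le> N + c1 * (L * N)" using dy nDg c10 by (intro add_mono mult_left_mono) auto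
      finally show ?thesis by (simp add: algebra_simps)
    qed
    have D2e: "snd (F p - F q) = - a *\<^sub>R D1 - c2 *\<^sub>R Dg"
      unfolding F_def D1_def Dg_def by (simp add: algebra_simps)
    have nD2: "norm (snd (F p - F q)) \<le> a * ((1 + c1 * L) * N) + c2 * (L * N)"
    proof -
      have "norm (snd (F p - F q)) \<le> a * norm D1 + c2 * norm Dg"
        unfolding D2e using norm_triangle_ineq4[of "- a *\<^sub>R D1" "c2 *\<^sub>R Dg"] a0 c20 by simp
      also have "\<dots> \<le> a * ((1 + c1 * L) * N) + c2 * (L * N)"
        using nD1 nDg a0 c20 by (intro add_mono mult_left_mono) auto
      finally show ?thesis .
    qed
    have "fst (F p - F q) = D1" unfolding F_def D1_def by simp
    then have "norm (F p - F q) \<le> norm D1 + norm (snd (F p - F q))"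
      using norm_Pair_le[of "fst (F p - F q)" "snd (F p - F q)"] unfolding prod.collapse by simp
    also have "\<dots> \<le> (1 + c1 * L) * N + (a * ((1 + c1 * L) * N) + c2 * (L * N))"
      using nD1 nD2 by (rule add_mono)
    also have "\<dots> \<le> K * N" unfolding K_def using N_def by (simp add: algebra_simps)
    finally show ?thesis by (simp add: N_def)
  qed
  have gc: "continuous_on S g" for S by (rule lip_cont[OF Lpos glip])
  have Hc: "continuous_on S H" for S by (rule lip_cont[OF L'pos Hlip])
  have sol_iff: "hr_solution \<mu> s \<beta> g H x0 X \<longleftrightarrow>
     (\<exists>X' X''.
        (\<forall>t\<ge>0. (X has_vector_derivative X' t) (at t within {0..})) \<and>
        (\<forall>t\<ge>0. (X' has_vector_derivative X'' t) (at t within {0..})) \<and>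
        continuous_on {0..} X'' \<and>
        (\<forall>t\<ge>0. X'' t + a *\<^sub>R X' t + c1 *\<^sub>R (H (X t) *v X' t) + c2 *\<^sub>R g (X t) = 0) \<and>
        X 0 = x0 \<and>
        X' 0 = - ((2 * sqrt s) / c2) *\<^sub>R g x0)" for X
    unfolding hr_solution_def a_def c1_def c2_def ..
  show ?thesis
  proof
    define y0 where "y0 = c1 *\<^sub>R g x0 - ((2 * sqrt s) / c2) *\<^sub>R g x0"
    obtain z where z0: "z 0 = (x0, y0)" and zc: "continuous_on {0..} z"
      and zd: "\<forall>t\<ge>0. (z has_vector_derivative F (z t)) (at t within {0..})"
      using ode_exists[OF Kpos Flip, of "(x0, y0)"] by blast
    define X where "X t = fst (z t)" for t
    define X' where "X' t = snd (z t) - c1 *\<^sub>R g (X t)" for t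
    define X'' where "X'' t = - a *\<^sub>R X' t - c2 *\<^sub>R g (X t) - c1 *\<^sub>R (H (X t) *v X' t)" for t
    have dX: "(X has_vector_derivative X' t) (at t within {0..})" if "t \<ge> 0" for t
      using hvd_fst[OF zd[rule_format, OF that]] unfolding X_def X'_def F_def
      by (simp add: X_def[symmetric])
    have dX': "(X' has_vector_derivative X'' t) (at t within {0..})" if "t \<ge> 0" for t
    proof -
      have "((\<lambda>t. snd (z t) - c1 *\<^sub>R g (X t)) has_vector_derivative
               snd (F (z t)) - c1 *\<^sub>R (H (X t) *v X' t)) (at t within {0..})"
        by (intro has_vector_derivative_diff hvd_scale
            hvd_snd[OF zd[rule_format, OF that]] hvd_chain[OF dX[OF that] gd])
      moreover have "X' = (\<lambda>t. snd (z t) - c1 *\<^sub>R g (X t))" by (simp add: fun_eq_iff X'_def)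
      moreover have "snd (F (z t)) = - a *\<^sub>R X' t - c2 *\<^sub>R g (X t)" by (simp add: F_def X'_def X_def)
      ultimately show ?thesis unfolding X''_def by simp
    qed
    have Xc: "continuous_on {0..} X" unfolding X_def by (intro continuous_intros zc)
    have gXc: "continuous_on {0..} (\<lambda>t. g (X t))"
      by (rule continuous_on_compose2[OF gc[of UNIV] Xc]) auto
    have HXc: "continuous_on {0..} (\<lambda>t. H (X t))"
      by (rule continuous_on_compose2[OF Hc[of UNIV] Xc]) auto
    have X'c: "continuous_on {0..} X'" unfolding X'_def
      by (intro continuous_intros gXc zc)
    have X''c: "continuous_on {0..} X''" unfolding X''_def
      by (intro continuous_intros gXc X'c mv_cont HXc)
    have "hr_solution \<mu> s \<beta> g H x0 X"
      unfolding sol_iff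
    proof (rule exI[of _ X'], rule exI[of _ X''], intro conjI allI impI)
      show "X 0 = x0" using z0 by (simp add: X_def)
      show "X' 0 = - ((2 * sqrt s) / c2) *\<^sub>R g x0" using z0 by (simp add: X'_def X_def y0_def)
    qed (use dX dX' X''c in \<open>auto simp: X''_def\<close>)
    then show "\<exists>X. hr_solution \<mu> s \<beta> g H x0 X" by blast
  next
    have zsol: "\<exists>z. z 0 = (x0, - ((2 * sqrt s) / c2) *\<^sub>R g x0 + c1 *\<^sub>R g x0) \<and>
        (\<forall>t\<ge>0. (z has_vector_derivative F (z t)) (at t within {0..})) \<and> (\<forall>t. X t = fst (z t))"
      if hX: "hr_solution \<mu> s \<beta> g H x0 X" for X
    proof -
      obtain X' X'' where dX: "\<And>t. t \<ge> 0 \<Longrightarrow> (X has_vector_derivative X' t) (at t within {0..})"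
        and dX': "\<And>t. t \<ge> 0 \<Longrightarrow> (X' has_vector_derivative X'' t) (at t within {0..})"
        and ode: "\<And>t. t \<ge> 0 \<Longrightarrow> X'' t + a *\<^sub>R X' t + c1 *\<^sub>R (H (X t) *v X' t) + c2 *\<^sub>R g (X t) = 0"
        and i1: "X 0 = x0" and i2: "X' 0 = - ((2 * sqrt s) / c2) *\<^sub>R g x0"
        using hX unfolding sol_iff by blast
      define z where "z t = (X t, X' t + c1 *\<^sub>R g (X t))" for t
      have "(z has_vector_derivative F (z t)) (at t within {0..})" if "t \<ge> 0" for t
      proof -
        have "(z has_vector_derivative (X' t, X'' t + c1 *\<^sub>R (H (X t) *v X' t))) (at t within {0..})"
          unfolding z_def
          by (intro has_vector_derivative_Pair has_vector_derivative_add hvd_scale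
              dX dX' hvd_chain[OF dX gd] that)
        moreover have "F (z t) = (X' t, X'' t + c1 *\<^sub>R (H (X t) *v X' t))"
        proof -
          have "X'' t + c1 *\<^sub>R (H (X t) *v X' t) = 
             (X'' t + a *\<^sub>R X' t + c1 *\<^sub>R (H (X t) *v X' t) + c2 *\<^sub>R g (X t)) - a *\<^sub>R X' t - c2 *\<^sub>R g (X t)"
            by (simp add: algebra_simps)
          also have "\<dots> = - a *\<^sub>R X' t - c2 *\<^sub>R g (X t)" using ode[OF that] by simp
          finally show ?thesis unfolding F_def z_def by simp
        qed
        ultimately show ?thesis by simp
      qed
      moreover have "z 0 = (x0, - ((2 * sqrt s) / c2) *\<^sub>R g x0 + c1 *\<^sub>R g x0)"
        unfolding z_def using i1 i2 by simp
      ultimately show ?thesis by (intro exI[of _ z]) (auto simp: z_def)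
    qed
    show "\<forall>X Y. hr_solution \<mu> s \<beta> g H x0 X \<longrightarrow> hr_solution \<mu> s \<beta> g H x0 Y \<longrightarrow> (\<forall>t\<ge>0. X t = Y t)"
    proof (intro allI impI)
      fix X Y :: "real \<Rightarrow> real^'n" and t :: real
      assume "hr_solution \<mu> s \<beta> g H x0 X" "hr_solution \<mu> s \<beta> g H x0 Y" "t \<ge> 0"
      then obtain z1 z2 where
        "z1 0 = (x0, - ((2 * sqrt s) / c2) *\<^sub>R g x0 + c1 *\<^sub>R g x0)"
        "\<forall>t\<ge>0. (z1 has_vector_derivative F (z1 t)) (at t within {0..})" "\<forall>t. X t = fst (z1 t)"
        "z2 0 = (x0, - ((2 * sqrt s) / c2) *\<^sub>R g x0 + c1 *\<^sub>R g x0)"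
        "\<forall>t\<ge>0. (z2 has_vector_derivative F (z2 t)) (at t within {0..})" "\<forall>t. Y t = fst (z2 t)"
        using zsol by meson
      with ode_unique[OF Kpos Flip, of z1 z2] \<open>t \<ge> 0\<close> show "X t = Y t" by auto
    qed
  qed
qed


end
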